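(* Let $a,b,c\in\mathbb F$ and $d\in\mathbb N$. If the $\Re$-module $R_d(a,b,c)$ is irreducible, then it is isomorphic to each of $R_d(-a-1,b,c)$, $R_d(a,-b-1,c)$ and $R_d(a,b,-c-1)$.
   Context: $\mathbb F$ is algebraically closed with $\operatorname{char}\mathbb F\ne2$. The Racah algebra $\Re$ is the unital associative $\mathbb F$-algebra with generators $A,B,C,D$ and relations $[A,B]=[B,C]=[C,A]=2D$ together with the requirement that each of $\alpha:=[A,D]+AC-BA$, $\beta:=[B,D]+BA-CB$, $\gamma:=[C,D]+CB-AC$ is central in $\Re$; $\delta:=A+B+C$. For $a,b,c\in\mathbb F$ and $d\in\mathbb N$ set $\theta_i=(a+\tfrac d2-i)(a+\tfrac d2-i+1)$, $\theta_i^*=(b+\tfrac d2-i)(b+\tfrac d2-i+1)$, $\varphi_i=i(i-d-1)(a+b+c+\tfrac d2-i+2)(a+b-c+\tfrac d2-i+1)$. $R_d(a,b,c)$ denotes the $(d+1)$-dimensional $\Re$-module with a basis $v_0,\dots,v_d$ such that $Av_i=\theta_iv_i+v_{i+1}$ ($v_{d+1}=0$), $Bv_i=\theta_i^*v_i+\varphi_iv_{i-1}$ ($v_{-1}=0$), and $\alpha,\beta,\delta$ act as the scalars $(c-b)(c+b+1)(a-\tfrac d2)(a+\tfrac d2+1)$, $(a-c)(a+c+1)(b-\tfrac d2)(b+\tfrac d2+1)$, $\tfrac d2(\tfrac d2+1)+a(a+1)+b(b+1)+c(c+1)$ respectively (exists, unique up to isomorphism). *)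

theory Defs
  imports "HOL-Computational_Algebra.Polynomial" "Jordan_Normal_Form.Matrix"
begin

text \<open>The module R_d(a,b,c) is realised on the column space F^(d+1) with
  v_i the i-th standard basis vector (i = 0..d).  The generators A and B act
  by the matrices below; since delta = A + B + C and [A,B] = 2D, the action of
  C is delta*I - A - B and that of D is (AB - BA)/2.\<close>

definition half_d :: "nat \<Rightarrow> 'a::field" where
  "half_d d = of_nat d / 2"

definition rac_theta :: "'a::field \<Rightarrow> nat \<Rightarrow> nat \<Rightarrow> 'a" where
  "rac_theta a d i = (a + half_d d - of_nat i) * (a + half_d d - of_nat i + 1)"

definition rac_phi :: "'a::field \<Rightarrow> 'a \<Rightarrow> 'a \<Rightarrow> nat \<Rightarrow> nat \<Rightarrow> 'a" where
  "rac_phi a b c d i = of_nat i * (of_nat i - of_nat d - 1)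
     * (a + b + c + half_d d - of_nat i + 2) * (a + b - c + half_d d - of_nat i + 1)"

definition rac_delta :: "'a::field \<Rightarrow> 'a \<Rightarrow> 'a \<Rightarrow> nat \<Rightarrow> 'a" where
  "rac_delta a b c d = half_d d * (half_d d + 1) + a * (a + 1) + b * (b + 1) + c * (c + 1)"

text \<open>A v_i = theta_i v_i + v_(i+1): column i has theta_i at row i, 1 at row i+1.\<close>
definition RA :: "nat \<Rightarrow> 'a::field \<Rightarrow> 'a \<Rightarrow> 'a \<Rightarrow> 'a mat" where
  "RA d a b c = mat (d+1) (d+1)
     (\<lambda>(r, s). if r = s then rac_theta a d s else if r = s + 1 then 1 else 0)"

text \<open>B v_i = theta*_i v_i + phi_i v_(i-1): column i has theta*_i at row i, phi_i at row i-1.\<close>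
definition RB :: "nat \<Rightarrow> 'a::field \<Rightarrow> 'a \<Rightarrow> 'a \<Rightarrow> 'a mat" where
  "RB d a b c = mat (d+1) (d+1)
     (\<lambda>(r, s). if r = s then rac_theta b d s else if r + 1 = s then rac_phi a b c d s else 0)"

definition RC :: "nat \<Rightarrow> 'a::field \<Rightarrow> 'a \<Rightarrow> 'a \<Rightarrow> 'a mat" where
  "RC d a b c = rac_delta a b c d \<cdot>\<^sub>m 1\<^sub>m (d+1) - RA d a b c - RB d a b c"

definition RD :: "nat \<Rightarrow> 'a::field \<Rightarrow> 'a \<Rightarrow> 'a \<Rightarrow> 'a mat" where
  "RD d a b c = inverse 2 \<cdot>\<^sub>m (RA d a b c * RB d a b c - RB d a b c * RA d a b c)"

definition rac_gens :: "nat \<Rightarrow> 'a::field \<Rightarrow> 'a \<Rightarrow> 'a \<Rightarrow> 'a mat list" where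
  "rac_gens d a b c = [RA d a b c, RB d a b c, RC d a b c, RD d a b c]"

text \<open>A submodule: a subspace of F^n stable under all generators (hence under the
  whole algebra).\<close>
definition is_submodule :: "nat \<Rightarrow> 'a::field mat list \<Rightarrow> 'a vec set \<Rightarrow> bool" where
  "is_submodule n Ms W \<longleftrightarrow> W \<subseteq> carrier_vec n \<and> 0\<^sub>v n \<in> W
     \<and> (\<forall>v\<in>W. \<forall>w\<in>W. v + w \<in> W) \<and> (\<forall>k. \<forall>v\<in>W. k \<cdot>\<^sub>v v \<in> W)
     \<and> (\<forall>M\<in>set Ms. \<forall>v\<in>W. M *\<^sub>v v \<in> W)"

definition rac_irreducible :: "nat \<Rightarrow> 'a::field \<Rightarrow> 'a \<Rightarrow> 'a \<Rightarrow> bool" where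
  "rac_irreducible d a b c \<longleftrightarrow>
     (\<forall>W. is_submodule (d+1) (rac_gens d a b c) W \<longrightarrow> W = {0\<^sub>v (d+1)} \<or> W = carrier_vec (d+1))"

definition rac_iso :: "nat \<Rightarrow> 'a::field \<Rightarrow> 'a \<Rightarrow> 'a \<Rightarrow> 'a \<Rightarrow> 'a \<Rightarrow> 'a \<Rightarrow> bool" where
  "rac_iso d a b c a' b' c' \<longleftrightarrow>
     (\<exists>P Q. P \<in> carrier_mat (d+1) (d+1) \<and> Q \<in> carrier_mat (d+1) (d+1)
        \<and> P * Q = 1\<^sub>m (d+1) \<and> Q * P = 1\<^sub>m (d+1)
        \<and> (\<forall>i<4. P * (rac_gens d a b c ! i) = (rac_gens d a' b' c' ! i) * P))"

end

theory Submission
  imports Defs "Jordan_Normal_Form.Determinant"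
begin


lemma mult_entry:
  assumes "X \<in> carrier_mat n n" "Y \<in> carrier_mat n n" "r<n" "s<n"
  shows "(X*Y)$$(r,s) = (\<Sum>k<(n::nat). X$$(r,k)*Y$$(k,s))"
  using assms by (auto simp: scalar_prod_def atLeast0LessThan intro!: sum.cong)

lemma sum_two: fixes f g :: "nat \<Rightarrow> 'a::field" shows
  "(\<Sum>k<(n::nat). (if k = p then f k else 0) + (if k = q then g k else 0))
   = (if p < n then f p else 0) + (if q < n then g q else 0)"
  by (simp add: sum.distrib sum.delta sum.delta')

lemma col1: fixes f g :: "nat \<Rightarrow> 'a::field" shows "s < n \<Longrightarrow> (\<Sum>k<(n::nat). f k * (if k = s then x else if k = s+1 then 1 else 0))
   = f s * x + (if s+1 < n then f (s+1) else 0)"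
proof -
  have "(\<Sum>k<(n::nat). f k * (if k = s then x else if k = s+1 then 1 else 0))
     = (\<Sum>k<(n::nat). (if k = s then f k * x else 0) + (if k = s+1 then f k else 0))"
    by (rule sum.cong) auto
  then show "s<n \<Longrightarrow> ?thesis" by (simp add: sum_two)
qed

lemma row1: fixes f g :: "nat \<Rightarrow> 'a::field" shows "r < n \<Longrightarrow> (\<Sum>k<(n::nat). (if r = k then x else if r = k+1 then 1 else 0) * g k)
   = x * g r + (if r \<ge> 1 then g (r-1) else 0)"
proof -
  have "(\<Sum>k<(n::nat). (if r = k then x else if r = k+1 then 1 else 0) * g k)
     = (\<Sum>k<(n::nat). (if k = r then x * g k else 0) + (if k = r - 1 then (if r \<ge> 1 then g k else 0) else 0))"
    by (rule sum.cong) auto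
  then show "r<n \<Longrightarrow> ?thesis" by (auto simp add: sum_two)
qed

lemma col2: fixes f g :: "nat \<Rightarrow> 'a::field" shows "s < n \<Longrightarrow> (\<Sum>k<(n::nat). f k * (if k = s then x else if k+1 = s then y else 0))
   = f s * x + (if s \<ge> 1 then f (s-1) * y else 0)"
proof -
  have "(\<Sum>k<(n::nat). f k * (if k = s then x else if k+1 = s then y else 0))
     = (\<Sum>k<(n::nat). (if k = s then f k * x else 0) + (if k = s - 1 then (if s \<ge> 1 then f k * y else 0) else 0))"
    by (rule sum.cong) auto
  then show "s<n \<Longrightarrow> ?thesis" by (auto simp add: sum_two)
qed

lemma row2: fixes f g :: "nat \<Rightarrow> 'a::field" shows "r < n \<Longrightarrow> (\<Sum>k<(n::nat). (if r = k then x else if r+1 = k then y k else 0) * g k)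
   = x * g r + (if r+1 < n then y (r+1) * g (r+1) else 0)"
proof -
  have "(\<Sum>k<(n::nat). (if r = k then x else if r+1 = k then y k else 0) * g k)
     = (\<Sum>k<(n::nat). (if k = r then x * g k else 0) + (if k = r+1 then y k * g k else 0))"
    by (rule sum.cong) auto
  then show "r<n \<Longrightarrow> ?thesis" by (auto simp add: sum_two)
qed

definition pa :: "'a::field \<Rightarrow> nat \<Rightarrow> nat \<Rightarrow> nat \<Rightarrow> 'a" where
  "pa a d r s = (if r \<le> s then of_nat (s choose r) * (\<Prod>k\<in>{r..<s}. (of_nat k - of_nat d))
      * (\<Prod>k<s-r. (2*a+1 - of_nat k)) else 0)"

lemma theta_diff:
  fixes a :: "'a::field"
  assumes "(2::'a) \<noteq> 0"
  shows "rac_theta (-a-1) d r - rac_theta a d s = (of_nat r + of_nat s - of_nat d) * (2*a + of_nat r - of_nat s + 1)"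
proof -
  have h: "2 * half_d d = (of_nat d::'a)" using assms by (simp add: half_d_def)
  have core: "\<And>H D x y::'a. 2*H = D \<Longrightarrow> (- a - 1 + H - x) * (- a - 1 + H - x + 1) - (a + H - y) * (a + H - y + 1)
     = (x + y - D) * (2*a + x - y + 1)"
  proof -
    fix H D x y :: 'a assume h: "2*H = D"
    have "(- a - 1 + H - x) * (- a - 1 + H - x + 1) - (a + H - y) * (a + H - y + 1)
     - (x + y - D) * (2*a + x - y + 1) = (2*H - D) * (-(2*a+x-y+1))"
      by (simp add: algebra_simps)
    then show "(- a - 1 + H - x) * (- a - 1 + H - x + 1) - (a + H - y) * (a + H - y + 1)
     = (x + y - D) * (2*a + x - y + 1)" using h by simp
  qed
  show ?thesis unfolding rac_theta_def by (rule core[OF h])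
qed

lemma absorb1: "r \<le> s \<Longrightarrow> (s - r) * (s choose r) = Suc r * (s choose Suc r)"
proof (cases s)
  case 0 then show "r \<le> s \<Longrightarrow> ?thesis" by simp
next
  case (Suc s')
  have "(s - r) * (s choose r) = s * ((s - 1) choose r)" by (rule binomial_absorb_comp)
  also have "\<dots> = Suc r * (s choose Suc r)" using Suc Suc_times_binomial[of r s'] by simp
  finally show ?thesis .
qed

lemma KA_core: fixes Cj Cr X Y T S D R J M :: "'a::field"
  assumes "(M + 1)*Cj = R*Cr" "R = J + 1" "S = R + M"
  shows "(Cj + Cr)*X*(S - D)*(Y*T) = ((R + S - D)*T)*(Cr*X*Y) + Cj*((J - D)*X)*(Y*T)"
proof -
  have "((R + S - D)*T)*(Cr*X*Y) + Cj*((J - D)*X)*(Y*T) - (Cj + Cr)*X*(S - D)*(Y*T)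
      = X*Y*T*(R*Cr + (J - S)*Cj)" by (simp add: algebra_simps)
  also have "J - S = -(M+1)" using assms by simp
  also have "R*Cr + (-(M+1))*Cj = R*Cr - (M+1)*Cj" by (simp add: algebra_simps)
  also have "\<dots> = 0" using assms(1) by simp
  finally show ?thesis by simp
qed



lemma KA:
  assumes "(2::'a::field) \<noteq> 0"
  shows "pa (a::'a) d r (s+1) = (rac_theta (-a-1) d r - rac_theta a d s) * pa a d r s
           + (if r \<ge> 1 then pa a d (r-1) s else 0)"
proof (cases "r \<le> s")
  case False
  then show ?thesis
    by (cases "r = s+1") (auto simp: pa_def)
next
  case True
  then obtain m where s: "s = r + m" using le_Suc_ex by blast
  define t where "t = 2*a+1"
  define X where "X = (\<Prod>k\<in>{r..<s}. (of_nat k - of_nat d::'a))"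
  define Y where "Y = (\<Prod>k<m. (t - of_nat k))"
  have e1: "pa a d r (s+1) = of_nat (Suc s choose r) * X * (of_nat s - of_nat d) * (Y * (t - of_nat m))"
    unfolding pa_def X_def Y_def t_def using s by (simp add: Suc_diff_le)
  have e2: "pa a d r s = of_nat (s choose r) * X * Y"
    unfolding pa_def X_def Y_def t_def using s by simp
  have td: "rac_theta (-a-1) d r - rac_theta a d s = (of_nat r + of_nat s - of_nat d) * (t - of_nat m)"
    unfolding theta_diff[OF assms] t_def s by (simp add: algebra_simps)
  show ?thesis
  proof (cases r)
    case 0
    then show ?thesis unfolding e1 e2 td using s by (simp add: algebra_simps)
  next
    case (Suc j)
    have Xj: "(\<Prod>k\<in>{j..<s}. (of_nat k - of_nat d::'a)) = (of_nat j - of_nat d) * X"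
      unfolding X_def Suc using True Suc by (simp add: prod.atLeast_Suc_lessThan)
    have e3: "pa a d j s = of_nat (s choose j) * ((of_nat j - of_nat d) * X) * (Y * (t - of_nat m))"
      unfolding pa_def Xj[symmetric] Y_def t_def using s Suc by simp
    have ab: "of_nat (s - j) * of_nat (s choose j) = (of_nat (Suc j) * of_nat (s choose Suc j)::'a)"
    proof -
      have abn: "(s - j) * (s choose j) = Suc j * (s choose Suc j)"
        by (rule absorb1) (use True Suc in simp)
      have "(of_nat ((s - j) * (s choose j))::'a) = of_nat (Suc j * (s choose Suc j))"
        by (simp only: abn)
      then show ?thesis by (simp only: of_nat_mult)
    qed
    have ab2: "(of_nat m + 1) * of_nat (s choose j) = (of_nat r * of_nat (s choose r)::'a)"
      using ab Suc s by (simp add: Suc_diff_le algebra_simps)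
    have pas: "of_nat (Suc s choose r) = (of_nat (s choose j) + of_nat (s choose r) :: 'a)"
      using Suc by simp
    have "pa a d r (s+1) = (of_nat (s choose j) + of_nat (s choose r))*X*(of_nat s - of_nat d)*(Y*(t - of_nat m))"
      using e1 pas by simp
    also have "\<dots> = ((of_nat r + of_nat s - of_nat d)*(t - of_nat m))*(of_nat (s choose r)*X*Y)
       + of_nat (s choose j)*((of_nat j - of_nat d)*X)*(Y*(t - of_nat m))"
      by (rule KA_core) (use ab2 Suc s in simp_all)
    finally have fin: "pa a d r (s+1) = ((of_nat r + of_nat s - of_nat d)*(t - of_nat m))*(of_nat (s choose r)*X*Y)
       + of_nat (s choose j)*((of_nat j - of_nat d)*X)*(Y*(t - of_nat m))" .
    have "(if r \<ge> 1 then pa a d (r-1) s else 0) = pa a d j s" using Suc by simp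
    then show ?thesis using fin by (simp only: td e2 e3)
  qed
qed


lemma KB_poly: fixes a b c H R M :: "'a::field"
  shows "((b+H-(R+M+1))*(b+H-(R+M+1)+1) - (b+H-R)*(b+H-R+1)) * (2*a+1 - M)
    + (M+1)*((a+b+c+H-(R+M+1)+2)*(a+b-c+H-(R+M+1)+1))
    = (M+1)*((-a-1+b+c+H-(R+1)+2)*(-a-1+b-c+H-(R+1)+1))"
  by (simp add: algebra_simps)

lemma KB:
  fixes a b c :: "'a::field"
  assumes "(2::'a) \<noteq> 0"
  shows "(rac_theta b d s - rac_theta b d r) * pa a d r s
     + (if s \<ge> 1 then rac_phi a b c d s * pa a d r (s-1) else 0)
     = rac_phi (-a-1) b c d (r+1) * pa a d (r+1) s"
proof (cases "r < s")
  case False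
  then show ?thesis by (cases "r = s") (auto simp: pa_def)
next
  case True
  then obtain m where s: "s = Suc (r + m)" using less_iff_Suc_add by blast
  define H where "H = (half_d d :: 'a)"
  have dH: "(of_nat d::'a) = 2*H" using assms by (simp add: H_def half_d_def)
  define t where "t = 2*a+1"
  define P1 where "P1 = (\<Prod>k\<in>{r..<s}. (of_nat k - of_nat d::'a))"
  define P2 where "P2 = (\<Prod>k\<in>{r..<r+m}. (of_nat k - of_nat d::'a))"
  define P3 where "P3 = (\<Prod>k\<in>{Suc r..<s}. (of_nat k - of_nat d::'a))"
  define Y where "Y = (\<Prod>k<m. (t - of_nat k))"
  define C0 where "C0 = (of_nat ((r+m) choose r) :: 'a)"
  define C1 where "C1 = (of_nat (s choose r) :: 'a)"
  define C2 where "C2 = (of_nat (s choose Suc r) :: 'a)"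
  have r1: "P1 = (of_nat r - of_nat d) * P3"
    unfolding P1_def P3_def using s by (simp add: prod.atLeast_Suc_lessThan)
  have r2: "P1 = P2 * (of_nat (r+m) - of_nat d)"
    unfolding P1_def P2_def using s by simp
  have b1: "(of_nat m + 1) * C1 = of_nat s * C0"
  proof -
    have "(s - r) * (s choose r) = s * ((s - 1) choose r)" by (rule binomial_absorb_comp)
    then have "(of_nat ((s - r) * (s choose r))::'a) = of_nat (s * ((s - 1) choose r))" by (simp only:)
    then show ?thesis unfolding C0_def C1_def using s by (simp add: algebra_simps)
  qed
  have b2: "(of_nat r + 1) * C2 = of_nat s * C0"
  proof -
    have "Suc r * (Suc (r+m) choose Suc r) = Suc (r+m) * ((r+m) choose r)" by (rule Suc_times_binomial)
    then have "(of_nat (Suc r * (Suc (r+m) choose Suc r))::'a) = of_nat (Suc (r+m) * ((r+m) choose r))" by (simp only:)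
    then show ?thesis unfolding C0_def C2_def using s by (simp add: algebra_simps)
  qed
  have e1: "pa a d r s = C1 * P1 * (Y * (t - of_nat m))"
    unfolding pa_def C1_def P1_def Y_def t_def using s by (simp add: Suc_diff_le)
  have e2: "pa a d r (s-1) = C0 * P2 * Y"
    unfolding pa_def C0_def P2_def Y_def t_def using s by simp
  have e3: "pa a d (r+1) s = C2 * P3 * Y"
    unfolding pa_def C2_def P3_def Y_def t_def using s by simp
  define F where "F = (a+b+c+H-(of_nat r+of_nat m+1)+2)*(a+b-c+H-(of_nat r+of_nat m+1)+1)"
  define G where "G = (-a-1+b+c+H-(of_nat r+1)+2)*(-a-1+b-c+H-(of_nat r+1)+1)"
  have phi1: "rac_phi a b c d s = of_nat s * (of_nat r + of_nat m - of_nat d) * F"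
    unfolding rac_phi_def F_def H_def s by (simp add: algebra_simps)
  have phi2: "rac_phi (-a-1) b c d (r+1) = (of_nat r + 1) * (of_nat r - of_nat d) * G"
    unfolding rac_phi_def G_def H_def by (simp add: algebra_simps)
  have th: "(rac_theta b d s - rac_theta b d r) * (t - of_nat m) + (of_nat m + 1) * F = (of_nat m + 1) * G"
    unfolding rac_theta_def F_def G_def t_def H_def[symmetric] s
    using KB_poly[of b H "of_nat r" "of_nat m" a c] by (simp add: algebra_simps)
  have "(rac_theta b d s - rac_theta b d r) * pa a d r s
     + (if s \<ge> 1 then rac_phi a b c d s * pa a d r (s-1) else 0)
     = (rac_theta b d s - rac_theta b d r) * (C1 * P1 * (Y * (t - of_nat m)))
       + (of_nat r + of_nat m - of_nat d) * F * Y * P2 * (of_nat s * C0)"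
    unfolding e1 e2 phi1 using s by simp
  also have "\<dots> = Y * C1 * P1 * ((rac_theta b d s - rac_theta b d r) * (t - of_nat m) + (of_nat m + 1) * F)"
    unfolding b1[symmetric] r2 by (simp add: algebra_simps)
  also have "\<dots> = Y * C1 * P1 * ((of_nat m + 1) * G)" unfolding th ..
  also have "\<dots> = Y * P1 * G * ((of_nat m + 1) * C1)" by (simp add: algebra_simps)
  also have "\<dots> = Y * P1 * G * ((of_nat r + 1) * C2)" using b1 b2 by simp
  also have "\<dots> = rac_phi (-a-1) b c d (r+1) * pa a d (r+1) s"
    unfolding phi2 e3 r1 by (simp add: algebra_simps)
  finally show ?thesis .
qed


lemma rowf1: fixes g x :: "nat \<Rightarrow> 'a::field" shows "r < n \<Longrightarrow> (\<Sum>k<(n::nat). (if r = k then x k else if r = k+1 then 1 else 0) * g k)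
   = x r * g r + (if r \<ge> 1 then g (r-1) else 0)"
proof -
  have "(\<Sum>k<(n::nat). (if r = k then x k else if r = k+1 then 1 else 0) * g k)
     = (\<Sum>k<(n::nat). (if k = r then x k * g k else 0) + (if k = r - 1 then (if r \<ge> 1 then g k else 0) else 0))"
    by (rule sum.cong) auto
  then show "r<n \<Longrightarrow> ?thesis" by (auto simp add: sum_two)
qed

lemma rowf2: fixes g x y :: "nat \<Rightarrow> 'a::field" shows "r < n \<Longrightarrow> (\<Sum>k<(n::nat). (if r = k then x k else if r+1 = k then y k else 0) * g k)
   = x r * g r + (if r+1 < n then y (r+1) * g (r+1) else 0)"
proof -
  have "(\<Sum>k<(n::nat). (if r = k then x k else if r+1 = k then y k else 0) * g k)
     = (\<Sum>k<(n::nat). (if k = r then x k * g k else 0) + (if k = r+1 then y k * g k else 0))"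
    by (rule sum.cong) auto
  then show "r<n \<Longrightarrow> ?thesis" by (simp add: sum_two)
qed

lemma mat_mult_entry:
  assumes "r < n" "s < n"
  shows "(mat n n f * mat n n g)$$(r,s) = (\<Sum>k<n. f (r,k) * g (k,s))"
  using assms by (auto simp: scalar_prod_def atLeast0LessThan intro!: sum.cong)

definition PaM :: "nat \<Rightarrow> 'a::field \<Rightarrow> 'a mat" where
  "PaM d a = mat (d+1) (d+1) (\<lambda>(r,s). pa a d r s)"

lemma pa_top: "r \<le> d \<Longrightarrow> pa a d r (d+1) = 0"
  unfolding pa_def by (auto intro!: prod_zero bexI[of _ d])

lemma phi_top: "rac_phi a b c d (d+1) = 0"
  unfolding rac_phi_def by simp

lemma acase_A:
  fixes a b c :: "'a::field"
  assumes "(2::'a) \<noteq> 0"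
  shows "PaM d a * RA d a b c = RA d (-a-1) b c * PaM d a"
proof (rule eq_matI)
  fix r s assume r: "r < dim_row (RA d (-a-1) b c * PaM d a)" and s: "s < dim_col (RA d (-a-1) b c * PaM d a)"
  then have r: "r < d+1" and s: "s < d+1" by (auto simp: RA_def PaM_def)
  have L: "(PaM d a * RA d a b c)$$(r,s) = pa a d r s * rac_theta a d s + (if s+1 < d+1 then pa a d r (s+1) else 0)"
    unfolding PaM_def RA_def mat_mult_entry[OF r s] using col1[OF s, of "\<lambda>k. pa a d r k"] by simp
  have R: "(RA d (-a-1) b c * PaM d a)$$(r,s) = rac_theta (-a-1) d r * pa a d r s + (if r \<ge> 1 then pa a d (r-1) s else 0)"
    unfolding PaM_def RA_def mat_mult_entry[OF r s] using rowf1[OF r, of "\<lambda>k. rac_theta (-a-1) d k" "\<lambda>k. pa a d k s"] by simp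
  show "(PaM d a * RA d a b c)$$(r,s) = (RA d (-a-1) b c * PaM d a)$$(r,s)"
  proof (cases "s+1 < d+1")
    case True
    then show ?thesis unfolding L R KA[OF assms] by (simp add: algebra_simps)
  next
    case False
    then have "s = d" using s by simp
    then have "pa a d r (s+1) = 0" using pa_top[of r d a] r by simp
    then show ?thesis unfolding L R using KA[OF assms, of a d r s] False by (simp add: algebra_simps)
  qed
qed (auto simp: RA_def PaM_def)

lemma acase_B:
  fixes a b c :: "'a::field"
  assumes "(2::'a) \<noteq> 0"
  shows "PaM d a * RB d a b c = RB d (-a-1) b c * PaM d a"
proof (rule eq_matI)
  fix r s assume r: "r < dim_row (RB d (-a-1) b c * PaM d a)" and s: "s < dim_col (RB d (-a-1) b c * PaM d a)"
  then have r: "r < d+1" and s: "s < d+1" by (auto simp: RB_def PaM_def)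
  have L: "(PaM d a * RB d a b c)$$(r,s) = pa a d r s * rac_theta b d s + (if s \<ge> 1 then pa a d r (s-1) * rac_phi a b c d s else 0)"
    unfolding PaM_def RB_def mat_mult_entry[OF r s] using col2[OF s, of "\<lambda>k. pa a d r k"] by simp
  have R: "(RB d (-a-1) b c * PaM d a)$$(r,s) = rac_theta b d r * pa a d r s + (if r+1 < d+1 then rac_phi (-a-1) b c d (r+1) * pa a d (r+1) s else 0)"
    unfolding PaM_def RB_def mat_mult_entry[OF r s] using rowf2[OF r, of "\<lambda>k. rac_theta b d k" "\<lambda>k. rac_phi (-a-1) b c d k" "\<lambda>k. pa a d k s"] by simp
  have R2: "(RB d (-a-1) b c * PaM d a)$$(r,s) = rac_theta b d r * pa a d r s + rac_phi (-a-1) b c d (r+1) * pa a d (r+1) s"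
    unfolding R using r phi_top[of "-a-1" b c d] by (cases "r = d") auto
  show "(PaM d a * RB d a b c)$$(r,s) = (RB d (-a-1) b c * PaM d a)$$(r,s)"
    unfolding L R2 KB[OF assms, of b d s r a c, symmetric] by (simp add: algebra_simps)
qed (auto simp: RB_def PaM_def)

lemma PaM_carrier: "PaM d a \<in> carrier_mat (d+1) (d+1)" by (simp add: PaM_def)

lemma PaM_det: fixes a :: "'a::field" shows "det (PaM d a) = 1"
proof -
  have ut: "upper_triangular (PaM d a)" by (auto simp: PaM_def pa_def)
  have "det (PaM d a) = prod_list (diag_mat (PaM d a) :: 'a list)" by (rule det_upper_triangular[OF ut PaM_carrier])
  also have "diag_mat (PaM d a) = map (\<lambda>i. 1) [0..<d+1]"
    by (auto simp: diag_mat_def PaM_def pa_def)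
  finally show ?thesis by (simp add: map_replicate_const del: upt_Suc)
qed


declare minus_carrier_mat[simp]
lemma RA_dims[simp]: "dim_row (RA d a b c) = Suc d" "dim_col (RA d a b c) = Suc d" by (simp_all add: RA_def)
lemma RB_dims[simp]: "dim_row (RB d a b c) = Suc d" "dim_col (RB d a b c) = Suc d" by (simp_all add: RB_def)
lemma RA_carrier[simp]: "RA d a b c \<in> carrier_mat (Suc d) (Suc d)" by (simp add: RA_def)
lemma RB_carrier[simp]: "RB d a b c \<in> carrier_mat (Suc d) (Suc d)" by (simp add: RB_def)
lemma RC_carrier[simp]: "RC d a b c \<in> carrier_mat (Suc d) (Suc d)" unfolding RC_def carrier_mat_def by simp
lemma RD_carrier[simp]: "RD d a b c \<in> carrier_mat (Suc d) (Suc d)" unfolding RD_def carrier_mat_def by simp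
lemma RA_carrier': "RA d a b c \<in> carrier_mat (d+1) (d+1)" by simp
lemma RB_carrier': "RB d a b c \<in> carrier_mat (d+1) (d+1)" by simp

lemma smult_mat_vec: assumes "M \<in> carrier_mat n n" "v \<in> carrier_vec n"
  shows "(k \<cdot>\<^sub>m M) *\<^sub>v v = (k::'a::field) \<cdot>\<^sub>v (M *\<^sub>v v)"
  by (rule eq_vecI) (use assms in auto)

lemma RC_vec: fixes a b c :: "'a::field" assumes v: "v \<in> carrier_vec (d+1)"
  shows "RC d a b c *\<^sub>v v = rac_delta a b c d \<cdot>\<^sub>v v - RA d a b c *\<^sub>v v - RB d a b c *\<^sub>v v"
proof -
  have 1: "rac_delta a b c d \<cdot>\<^sub>m 1\<^sub>m (d+1) \<in> carrier_mat (d+1) (d+1)" by simp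
  have "RC d a b c *\<^sub>v v = (rac_delta a b c d \<cdot>\<^sub>m 1\<^sub>m (d+1) - RA d a b c) *\<^sub>v v - RB d a b c *\<^sub>v v"
    unfolding RC_def by (rule minus_mult_distrib_mat_vec[OF _ RB_carrier']) (use v in auto)
  also have "(rac_delta a b c d \<cdot>\<^sub>m 1\<^sub>m (d+1) - RA d a b c) *\<^sub>v v
     = (rac_delta a b c d \<cdot>\<^sub>m 1\<^sub>m (d+1)) *\<^sub>v v - RA d a b c *\<^sub>v v"
    by (rule minus_mult_distrib_mat_vec[OF 1 RA_carrier']) (use v in auto)
  also have "(rac_delta a b c d \<cdot>\<^sub>m 1\<^sub>m (d+1)) *\<^sub>v v = rac_delta a b c d \<cdot>\<^sub>v v"
    using smult_mat_vec[OF one_carrier_mat v] v by simp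
  finally show ?thesis .
qed

lemma RD_vec: fixes a b c :: "'a::field" assumes v: "v \<in> carrier_vec (d+1)"
  shows "RD d a b c *\<^sub>v v = inverse 2 \<cdot>\<^sub>v (RA d a b c *\<^sub>v (RB d a b c *\<^sub>v v) - RB d a b c *\<^sub>v (RA d a b c *\<^sub>v v))"
proof -
  let ?A = "RA d a b c" let ?B = "RB d a b c"
  have AB: "?A * ?B \<in> carrier_mat (d+1) (d+1)" "?B * ?A \<in> carrier_mat (d+1) (d+1)" by auto
  have "RD d a b c *\<^sub>v v = inverse 2 \<cdot>\<^sub>v ((?A * ?B - ?B * ?A) *\<^sub>v v)"
    unfolding RD_def by (rule smult_mat_vec[of _ "Suc d"]) (use v in auto)
  also have "(?A * ?B - ?B * ?A) *\<^sub>v v = (?A * ?B) *\<^sub>v v - (?B * ?A) *\<^sub>v v"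
    by (rule minus_mult_distrib_mat_vec[OF AB]) (use v in auto)
  also have "\<dots> = ?A *\<^sub>v (?B *\<^sub>v v) - ?B *\<^sub>v (?A *\<^sub>v v)"
    by (simp only: assoc_mult_mat_vec[OF RA_carrier' RB_carrier' v] assoc_mult_mat_vec[OF RB_carrier' RA_carrier' v])
  finally show ?thesis .
qed

lemma prefix_RA:
  fixes a b c :: "'a::field"
  assumes x: "x \<in> carrier_vec (d+1)" and z: "\<forall>k<i. x$k = 0" and k: "k < i" and i: "i \<le> d"
  shows "(RA d a b c *\<^sub>v x) $ k = 0"
proof -
  have "(RA d a b c *\<^sub>v x) $ k = row (RA d a b c) k \<bullet> x" using k i by simp
  also have "\<dots> = (\<Sum>l\<in>{0..<dim_vec x}. row (RA d a b c) k $ l * x $ l)" by (simp only: scalar_prod_def)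
  also have "\<dots> = (\<Sum>l\<in>{0..<d+1}. RA d a b c $$ (k,l) * x $ l)"
    using x k i by (intro sum.cong) auto
  also have "\<dots> = 0"
    by (rule sum.neutral) (use z k i in \<open>auto simp: RA_def\<close>)
  finally show ?thesis .
qed

lemma prefix_RB:
  fixes a b c :: "'a::field"
  assumes x: "x \<in> carrier_vec (d+1)" and z: "\<forall>k<i. x$k = 0" and k: "k < i" and i: "i \<le> d"
    and ph: "rac_phi a b c d i = 0"
  shows "(RB d a b c *\<^sub>v x) $ k = 0"
proof -
  have "(RB d a b c *\<^sub>v x) $ k = row (RB d a b c) k \<bullet> x" using k i by simp
  also have "\<dots> = (\<Sum>l\<in>{0..<dim_vec x}. row (RB d a b c) k $ l * x $ l)" by (simp only: scalar_prod_def)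
  also have "\<dots> = (\<Sum>l\<in>{0..<d+1}. RB d a b c $$ (k,l) * x $ l)"
    using x k i by (intro sum.cong) auto
  also have "\<dots> = 0"
  proof (rule sum.neutral, intro ballI)
    fix l assume l: "l \<in> {0..<d+1}"
    show "RB d a b c $$ (k,l) * x $ l = 0"
    proof (cases "l < i")
      case True then show ?thesis using z by simp
    next
      case nl: False
      show ?thesis
      proof (cases "l = Suc k")
        case True
        then have il: "i = Suc k" using nl k by auto
        show ?thesis using True il ph l by (simp add: RB_def)
      next
        case False
        then show ?thesis using l k nl i by (auto simp: RB_def)
      qed
    qed
  qed
  finally show ?thesis .
qed

lemma red:
  fixes a b c a' b' c' :: "'a::field"
  assumes P: "P \<in> carrier_mat (d+1) (d+1)" and Q: "Q \<in> carrier_mat (d+1) (d+1)"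
    and PQ: "P * Q = 1\<^sub>m (d+1)"
    and hA: "P * RA d a b c = RA d a' b' c' * P" and hB: "P * RB d a b c = RB d a' b' c' * P"
    and i: "1 \<le> i" "i \<le> d" and ph: "rac_phi a' b' c' d i = 0"
  shows "\<not> rac_irreducible d a b c"
proof
  assume irr: "rac_irreducible d a b c"
  define n where "n = d+1"
  define W where "W = {v \<in> carrier_vec n. \<forall>k<i. (P *\<^sub>v v) $ k = 0}"
  have Pn: "P \<in> carrier_mat n n" using P n_def by simp
  have kn: "\<And>k. k < i \<Longrightarrow> k < n" using i n_def by auto
  have WA: "RA d a b c *\<^sub>v v \<in> W" if v: "v \<in> W" for v
  proof -
    have vc: "v \<in> carrier_vec (d+1)" using v W_def n_def by simp
    have "P *\<^sub>v (RA d a b c *\<^sub>v v) = (P * RA d a b c) *\<^sub>v v"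
      by (rule assoc_mult_mat_vec[symmetric, OF P RA_carrier']) (use vc in auto)
    also have "\<dots> = (RA d a' b' c' * P) *\<^sub>v v" by (simp only: hA)
    also have "\<dots> = RA d a' b' c' *\<^sub>v (P *\<^sub>v v)"
      by (rule assoc_mult_mat_vec[OF RA_carrier' P]) (use vc in auto)
    finally have "P *\<^sub>v (RA d a b c *\<^sub>v v) = RA d a' b' c' *\<^sub>v (P *\<^sub>v v)" .
    moreover have "\<forall>k<i. (RA d a' b' c' *\<^sub>v (P *\<^sub>v v)) $ k = 0"
      using prefix_RA[of "P *\<^sub>v v" d i _ a' b' c'] v vc P i unfolding W_def by auto
    ultimately show ?thesis using vc W_def n_def mult_mat_vec_carrier[OF RA_carrier' vc] mult_mat_vec_carrier[OF RB_carrier' vc] by simp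
  qed
  have WB: "RB d a b c *\<^sub>v v \<in> W" if v: "v \<in> W" for v
  proof -
    have vc: "v \<in> carrier_vec (d+1)" using v W_def n_def by simp
    have "P *\<^sub>v (RB d a b c *\<^sub>v v) = (P * RB d a b c) *\<^sub>v v"
      by (rule assoc_mult_mat_vec[symmetric, OF P RB_carrier']) (use vc in auto)
    also have "\<dots> = (RB d a' b' c' * P) *\<^sub>v v" by (simp only: hB)
    also have "\<dots> = RB d a' b' c' *\<^sub>v (P *\<^sub>v v)"
      by (rule assoc_mult_mat_vec[OF RB_carrier' P]) (use vc in auto)
    finally have "P *\<^sub>v (RB d a b c *\<^sub>v v) = RB d a' b' c' *\<^sub>v (P *\<^sub>v v)" .
    moreover have "\<forall>k<i. (RB d a' b' c' *\<^sub>v (P *\<^sub>v v)) $ k = 0"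
      using prefix_RB[of "P *\<^sub>v v" d i _ a' b' c'] v vc P i ph unfolding W_def by auto
    ultimately show ?thesis using vc W_def n_def mult_mat_vec_carrier[OF RA_carrier' vc] mult_mat_vec_carrier[OF RB_carrier' vc] by simp
  qed
  have Wadd: "v + w \<in> W" if vW: "v \<in> W" "w \<in> W" for v w
  proof -
    have c: "v \<in> carrier_vec n" "w \<in> carrier_vec n" using that W_def by auto
    have e: "P *\<^sub>v (v + w) = P *\<^sub>v v + P *\<^sub>v w" by (rule mult_add_distrib_mat_vec[OF Pn c])
    have "(P *\<^sub>v (v + w)) $ k = 0" if k: "k < i" for k
    proof -
      have "(P *\<^sub>v v + P *\<^sub>v w) $ k = (P *\<^sub>v v) $ k + (P *\<^sub>v w) $ k"
        by (rule index_add_vec(1)) (use kn[OF k] Pn in simp)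
      then show ?thesis using e vW k unfolding W_def by (simp del: index_mult_mat_vec)
    qed
    then show ?thesis using c unfolding W_def by simp
  qed
  have Wsm: "k \<cdot>\<^sub>v v \<in> W" if vW: "v \<in> W" for v k
  proof -
    have c: "v \<in> carrier_vec n" using that W_def by auto
    have e: "P *\<^sub>v (k \<cdot>\<^sub>v v) = k \<cdot>\<^sub>v (P *\<^sub>v v)" by (rule mult_mat_vec[OF Pn c])
    have "(P *\<^sub>v (k \<cdot>\<^sub>v v)) $ j = 0" if j: "j < i" for j
    proof -
      have "(k \<cdot>\<^sub>v (P *\<^sub>v v)) $ j = k * (P *\<^sub>v v) $ j"
        by (rule index_smult_vec(1)) (use kn[OF j] Pn in simp)
      then show ?thesis using e vW j unfolding W_def by (simp del: index_mult_mat_vec)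
    qed
    then show ?thesis using c unfolding W_def by simp
  qed
  have Wminus: "v - w \<in> W" if "v \<in> W" "w \<in> W" for v w
  proof -
    have c: "v \<in> carrier_vec n" "w \<in> carrier_vec n" using that W_def by auto
    have "v - w = v + (-1) \<cdot>\<^sub>v w" by (rule eq_vecI) (use c in auto)
    then show ?thesis using Wadd Wsm that by simp
  qed
  have WC: "RC d a b c *\<^sub>v v \<in> W" if "v \<in> W" for v
  proof -
    have c: "v \<in> carrier_vec (d+1)" using that W_def n_def by auto
    show ?thesis unfolding RC_vec[OF c] using that WA WB Wsm Wminus by simp
  qed
  have WD: "RD d a b c *\<^sub>v v \<in> W" if "v \<in> W" for v
  proof -
    have c: "v \<in> carrier_vec (d+1)" using that W_def n_def by auto
    show ?thesis unfolding RD_vec[OF c] using that WA WB Wsm Wminus by simp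
  qed
  have zero: "0\<^sub>v n \<in> W" unfolding W_def using Pn kn by auto
  have sub: "is_submodule (d+1) (rac_gens d a b c) W"
    unfolding is_submodule_def rac_gens_def
    using zero Wadd Wsm WA WB WC WD by (auto simp: W_def n_def)
  have ue: "P *\<^sub>v (Q *\<^sub>v unit_vec n j) = unit_vec n j" for j
  proof -
    have "P *\<^sub>v (Q *\<^sub>v unit_vec n j) = (P * Q) *\<^sub>v unit_vec n j"
      by (rule assoc_mult_mat_vec[symmetric, OF P Q]) (use n_def in auto)
    then show ?thesis using PQ n_def by simp
  qed
  have m1: "Q *\<^sub>v unit_vec n d \<in> W" unfolding W_def using ue[of d] Q i n_def by auto
  have m1': "Q *\<^sub>v unit_vec n d \<noteq> 0\<^sub>v n"
  proof
    assume "Q *\<^sub>v unit_vec n d = 0\<^sub>v n"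
    then have "unit_vec n d = P *\<^sub>v 0\<^sub>v n" using ue[of d] by simp
    then have "unit_vec n d $ d = (P *\<^sub>v 0\<^sub>v n) $ d" by simp
    then show False using Pn n_def by (simp add: scalar_prod_def)
  qed
  have m2: "Q *\<^sub>v unit_vec n 0 \<notin> W" unfolding W_def using ue[of 0] Q i n_def by auto
  have "W = {0\<^sub>v (d+1)} \<or> W = carrier_vec (d+1)" using irr sub unfolding rac_irreducible_def by blast
  then show False
  proof
    assume "W = {0\<^sub>v (d+1)}" then show False using m1 m1' n_def by auto
  next
    assume "W = carrier_vec (d+1)" then show False using m2 Q n_def by auto
  qed
qed


lemma as3: fixes A B C :: "'a::comm_ring_1 mat" shows
  "A \<in> carrier_mat n n \<Longrightarrow> B \<in> carrier_mat n n \<Longrightarrow> C \<in> carrier_mat n n \<Longrightarrow> A * B * C = A * (B * C)"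
  by (rule assoc_mult_mat)

lemma chain:
  fixes T Tp Y Yp Dd Pa E :: "'a::comm_ring_1 mat"
  assumes c: "T \<in> carrier_mat n n" "Tp \<in> carrier_mat n n" "Y \<in> carrier_mat n n" "Yp \<in> carrier_mat n n"
    "Dd \<in> carrier_mat n n" "Pa \<in> carrier_mat n n" "E \<in> carrier_mat n n"
    and h1: "T * Dd = Dd * Y" and h2: "Pa * Yp = Y * Pa" and h3: "E * Tp = Yp * E"
  shows "T * (Dd * Pa * E) = (Dd * Pa * E) * Tp"
proof -
  have "T * (Dd * Pa * E) = ((T * Dd) * Pa) * E" using c by (simp add: as3)
  also have "\<dots> = (Dd * (Y * Pa)) * E" unfolding h1 using c by (simp add: as3)
  also have "\<dots> = (Dd * Pa) * (Yp * E)" unfolding h2[symmetric] using c by (simp add: as3)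
  also have "\<dots> = (Dd * Pa * E) * Tp" unfolding h3[symmetric] using c by (simp add: as3)
  finally show ?thesis .
qed


lemma gen_iso:
  fixes a b c a' b' c' :: "'a::field"
  assumes P: "P \<in> carrier_mat (d+1) (d+1)" and dP: "det P \<noteq> 0"
    and hA: "P * RA d a b c = RA d a' b' c' * P" and hB: "P * RB d a b c = RB d a' b' c' * P"
    and hd: "rac_delta a b c d = rac_delta a' b' c' d"
  shows "rac_iso d a b c a' b' c'"
proof -
  have "P \<in> Units (ring_mat TYPE('a) (d+1) undefined)" by (rule det_non_zero_imp_unit[OF P dP])
  then obtain Q where Q: "Q \<in> carrier_mat (d+1) (d+1)" and QP: "Q * P = 1\<^sub>m (d+1)" and PQ: "P * Q = 1\<^sub>m (d+1)"
    unfolding Units_def ring_mat_def by auto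
  define n where "n = d+1"
  let ?A = "RA d a b c" let ?B = "RB d a b c" let ?A' = "RA d a' b' c'" let ?B' = "RB d a' b' c'"
  define k where "k = rac_delta a b c d"
  have cA: "?A \<in> carrier_mat n n" "?B \<in> carrier_mat n n" "?A' \<in> carrier_mat n n" "?B' \<in> carrier_mat n n"
    and cP: "P \<in> carrier_mat n n" and c1: "k \<cdot>\<^sub>m 1\<^sub>m n \<in> carrier_mat n n"
    using P by (auto simp: n_def)
  have hC: "P * RC d a b c = RC d a' b' c' * P"
  proof -
    have "P * RC d a b c = P * (k \<cdot>\<^sub>m 1\<^sub>m n - ?A) - P * ?B"
      unfolding RC_def k_def[symmetric] n_def[symmetric]
      by (rule mult_minus_distrib_mat[OF cP _ cA(2)]) (use c1 cA in simp)
    also have "P * (k \<cdot>\<^sub>m 1\<^sub>m n - ?A) = P * (k \<cdot>\<^sub>m 1\<^sub>m n) - P * ?A"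
      by (rule mult_minus_distrib_mat[OF cP c1 cA(1)])
    also have "P * (k \<cdot>\<^sub>m 1\<^sub>m n) = k \<cdot>\<^sub>m P"
      using mult_smult_distrib[OF cP one_carrier_mat, of k] cP by simp
    finally have L: "P * RC d a b c = k \<cdot>\<^sub>m P - P * ?A - P * ?B" .
    have "RC d a' b' c' * P = (k \<cdot>\<^sub>m 1\<^sub>m n - ?A') * P - ?B' * P"
      unfolding RC_def hd[symmetric] k_def[symmetric] n_def[symmetric]
      by (rule minus_mult_distrib_mat[OF _ cA(4) cP]) (use c1 cA in simp)
    also have "(k \<cdot>\<^sub>m 1\<^sub>m n - ?A') * P = (k \<cdot>\<^sub>m 1\<^sub>m n) * P - ?A' * P"
      by (rule minus_mult_distrib_mat[OF c1 cA(3) cP])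
    also have "(k \<cdot>\<^sub>m 1\<^sub>m n) * P = k \<cdot>\<^sub>m P"
      using mult_smult_assoc_mat[OF one_carrier_mat cP, of k] cP by simp
    finally show ?thesis using hA hB L by simp
  qed
  have hD: "P * RD d a b c = RD d a' b' c' * P"
  proof -
    have AB: "?A * ?B \<in> carrier_mat n n" "?B * ?A \<in> carrier_mat n n"
      "?A' * ?B' \<in> carrier_mat n n" "?B' * ?A' \<in> carrier_mat n n" using cA by auto
    have 1: "P * (?A * ?B) = (?A' * ?B') * P"
    proof -
      have "P * (?A * ?B) = (P * ?A) * ?B" using cA cP by (simp add: as3)
      also have "\<dots> = ?A' * (P * ?B)" unfolding hA using cA cP by (simp add: as3)
      also have "\<dots> = (?A' * ?B') * P" unfolding hB using cA cP by (simp add: as3)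
      finally show ?thesis .
    qed
    have 2: "P * (?B * ?A) = (?B' * ?A') * P"
    proof -
      have "P * (?B * ?A) = (P * ?B) * ?A" using cA cP by (simp add: as3)
      also have "\<dots> = ?B' * (P * ?A)" unfolding hB using cA cP by (simp add: as3)
      also have "\<dots> = (?B' * ?A') * P" unfolding hA using cA cP by (simp add: as3)
      finally show ?thesis .
    qed
    have ABm: "?A * ?B - ?B * ?A \<in> carrier_mat n n" "?A' * ?B' - ?B' * ?A' \<in> carrier_mat n n"
      using AB by auto
    have "P * RD d a b c = inverse 2 \<cdot>\<^sub>m (P * (?A * ?B - ?B * ?A))"
      unfolding RD_def by (rule mult_smult_distrib[OF cP ABm(1)])
    also have "P * (?A * ?B - ?B * ?A) = P * (?A * ?B) - P * (?B * ?A)"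
      by (rule mult_minus_distrib_mat[OF cP AB(1,2)])
    finally have L: "P * RD d a b c = inverse 2 \<cdot>\<^sub>m (P * (?A * ?B) - P * (?B * ?A))" .
    have "RD d a' b' c' * P = inverse 2 \<cdot>\<^sub>m ((?A' * ?B' - ?B' * ?A') * P)"
      unfolding RD_def by (rule mult_smult_assoc_mat[OF ABm(2) cP])
    also have "(?A' * ?B' - ?B' * ?A') * P = (?A' * ?B') * P - (?B' * ?A') * P"
      by (rule minus_mult_distrib_mat[OF AB(3,4) cP])
    finally show ?thesis using 1 2 L by simp
  qed
  show ?thesis unfolding rac_iso_def
  proof (intro exI conjI allI impI)
    show "P \<in> carrier_mat (d+1) (d+1)" "Q \<in> carrier_mat (d+1) (d+1)" "P * Q = 1\<^sub>m (d+1)" "Q * P = 1\<^sub>m (d+1)"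
      using P Q PQ QP by auto
    fix i :: nat assume "i < 4"
    then consider "i = 0" | "i = 1" | "i = 2" | "i = 3" by linarith
    then show "P * rac_gens d a b c ! i = rac_gens d a' b' c' ! i * P"
      by cases (simp_all add: rac_gens_def hA hB hC hD)
  qed
qed


definition DM :: "nat \<Rightarrow> (nat \<Rightarrow> 'a::field) \<Rightarrow> 'a mat" where
  "DM d f = mat (d+1) (d+1) (\<lambda>(r,s). if r = s then f r else 0)"

definition dd :: "(nat \<Rightarrow> 'a::field) \<Rightarrow> nat \<Rightarrow> 'a" where
  "dd ph s = (\<Prod>k<s. ph (Suc k))"

lemma dd_Suc: "dd ph (Suc s) = dd ph s * ph (Suc s)" by (simp add: dd_def)

lemma DM_carrier: "DM d f \<in> carrier_mat (d+1) (d+1)" by (simp add: DM_def)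

lemma mult_DM_entry:
  fixes M :: "'a::field mat"
  assumes M: "M \<in> carrier_mat (d+1) (d+1)" and r: "r < d+1" and s: "s < d+1"
  shows "(M * DM d f)$$(r,s) = M$$(r,s) * f s"
proof -
  have "(M * DM d f)$$(r,s) = (\<Sum>k<d+1. M$$(r,k) * DM d f $$ (k,s))"
    by (rule mult_entry[OF M DM_carrier r s])
  also have "\<dots> = (\<Sum>k<d+1. if k = s then M$$(r,k) * f s else 0)"
    by (rule sum.cong) (use s in \<open>auto simp: DM_def\<close>)
  also have "\<dots> = M$$(r,s) * f s" using s by simp
  finally show ?thesis .
qed

lemma DM_mult_entry:
  fixes M :: "'a::field mat"
  assumes M: "M \<in> carrier_mat (d+1) (d+1)" and r: "r < d+1" and s: "s < d+1"
  shows "(DM d f * M)$$(r,s) = f r * M$$(r,s)"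
proof -
  have "(DM d f * M)$$(r,s) = (\<Sum>k<d+1. DM d f $$ (r,k) * M$$(k,s))"
    by (rule mult_entry[OF DM_carrier M r s])
  also have "\<dots> = (\<Sum>k<d+1. if k = r then f r * M$$(k,s) else 0)"
    by (rule sum.cong) (use r in \<open>auto simp: DM_def\<close>)
  also have "\<dots> = f r * M$$(r,s)" using r by simp
  finally show ?thesis .
qed

lemma det_DM:
  fixes f :: "nat \<Rightarrow> 'a::field"
  assumes "\<And>r. r \<le> d \<Longrightarrow> f r \<noteq> 0"
  shows "det (DM d f) \<noteq> 0"
proof -
  have ut: "upper_triangular (DM d f)" by (auto simp: DM_def)
  have "det (DM d f) = prod_list (diag_mat (DM d f))" by (rule det_upper_triangular[OF ut DM_carrier])
  also have "\<dots> = (\<Prod>i = 0..<d+1. f i)" unfolding prod_list_diag_prod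
    by (rule prod.cong) (auto simp: DM_def)
  also have "\<dots> \<noteq> 0" using assms by (auto simp: prod_zero_iff)
  finally show ?thesis .
qed

lemma phi_sym: "rac_phi b a c d i = rac_phi a b c d i"
  unfolding rac_phi_def by (simp add: algebra_simps)

lemma T1:
  fixes a b c :: "'a::field"
  shows "transpose_mat (RB d a b c) * DM d (dd (rac_phi a b c d)) = DM d (dd (rac_phi a b c d)) * RA d b a c"
proof (rule eq_matI)
  fix r s assume "r < dim_row (DM d (dd (rac_phi a b c d)) * RA d b a c)" "s < dim_col (DM d (dd (rac_phi a b c d)) * RA d b a c)"
  then have r: "r < d+1" and s: "s < d+1" by (auto simp: DM_def)
  have tc: "transpose_mat (RB d a b c) \<in> carrier_mat (d+1) (d+1)" by simp
  show "(transpose_mat (RB d a b c) * DM d (dd (rac_phi a b c d)))$$(r,s) = (DM d (dd (rac_phi a b c d)) * RA d b a c)$$(r,s)"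
    unfolding mult_DM_entry[OF tc r s] DM_mult_entry[OF RA_carrier' r s]
    using r s by (auto simp: RA_def RB_def dd_Suc)
qed (auto simp: DM_def)

lemma T2:
  fixes a b c :: "'a::field"
  shows "transpose_mat (RA d a b c) * DM d (dd (rac_phi a b c d)) = DM d (dd (rac_phi a b c d)) * RB d b a c"
proof (rule eq_matI)
  fix r s assume "r < dim_row (DM d (dd (rac_phi a b c d)) * RB d b a c)" "s < dim_col (DM d (dd (rac_phi a b c d)) * RB d b a c)"
  then have r: "r < d+1" and s: "s < d+1" by (auto simp: DM_def)
  have tc: "transpose_mat (RA d a b c) \<in> carrier_mat (d+1) (d+1)" by simp
  show "(transpose_mat (RA d a b c) * DM d (dd (rac_phi a b c d)))$$(r,s) = (DM d (dd (rac_phi a b c d)) * RB d b a c)$$(r,s)"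
    unfolding mult_DM_entry[OF tc r s] DM_mult_entry[OF RB_carrier' r s]
    using r s by (auto simp: RA_def RB_def dd_Suc phi_sym)
qed (auto simp: DM_def)

lemma T3:
  fixes a b c :: "'a::field"
  assumes nz: "\<And>k. 1 \<le> k \<Longrightarrow> k \<le> d \<Longrightarrow> rac_phi a b c d k \<noteq> 0"
  shows "DM d (\<lambda>s. inverse (dd (rac_phi a b c d) s)) * transpose_mat (RB d a b c) = RA d b a c * DM d (\<lambda>s. inverse (dd (rac_phi a b c d) s))"
proof (rule eq_matI)
  fix r s assume "r < dim_row (RA d b a c * DM d (\<lambda>s. inverse (dd (rac_phi a b c d) s)))" "s < dim_col (RA d b a c * DM d (\<lambda>s. inverse (dd (rac_phi a b c d) s)))"
  then have r: "r < d+1" and s: "s < d+1" by (auto simp: DM_def)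
  have tc: "transpose_mat (RB d a b c) \<in> carrier_mat (d+1) (d+1)" by simp
  have key: "inverse (dd (rac_phi a b c d) (Suc s)) * rac_phi a b c d (Suc s) = inverse (dd (rac_phi a b c d) s)"
    if "Suc s < d+1" for s
    using nz[of "Suc s"] that by (simp add: dd_Suc field_simps)
  show "(DM d (\<lambda>s. inverse (dd (rac_phi a b c d) s)) * transpose_mat (RB d a b c))$$(r,s) = (RA d b a c * DM d (\<lambda>s. inverse (dd (rac_phi a b c d) s)))$$(r,s)"
    unfolding mult_DM_entry[OF RA_carrier' r s] DM_mult_entry[OF tc r s]
    using r s key[of s] by (auto simp: RA_def RB_def)
qed (auto simp: DM_def)

lemma T4:
  fixes a b c :: "'a::field"
  assumes nz: "\<And>k. 1 \<le> k \<Longrightarrow> k \<le> d \<Longrightarrow> rac_phi a b c d k \<noteq> 0"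
  shows "DM d (\<lambda>s. inverse (dd (rac_phi a b c d) s)) * transpose_mat (RA d a b c) = RB d b a c * DM d (\<lambda>s. inverse (dd (rac_phi a b c d) s))"
proof (rule eq_matI)
  fix r s assume "r < dim_row (RB d b a c * DM d (\<lambda>s. inverse (dd (rac_phi a b c d) s)))" "s < dim_col (RB d b a c * DM d (\<lambda>s. inverse (dd (rac_phi a b c d) s)))"
  then have r: "r < d+1" and s: "s < d+1" by (auto simp: DM_def)
  have tc: "transpose_mat (RA d a b c) \<in> carrier_mat (d+1) (d+1)" by simp
  have key: "rac_phi a b c d (Suc r) * inverse (dd (rac_phi a b c d) (Suc r)) = inverse (dd (rac_phi a b c d) r)"
    if "Suc r < d+1" for r
    using nz[of "Suc r"] that by (simp add: dd_Suc field_simps)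
  show "(DM d (\<lambda>s. inverse (dd (rac_phi a b c d) s)) * transpose_mat (RA d a b c))$$(r,s) = (RB d b a c * DM d (\<lambda>s. inverse (dd (rac_phi a b c d) s)))$$(r,s)"
    unfolding mult_DM_entry[OF RB_carrier' r s] DM_mult_entry[OF tc r s]
    using r s key[of r] by (auto simp: RA_def RB_def phi_sym)
qed (auto simp: DM_def)


lemma bcase:
  fixes a b c :: "'a::field"
  assumes two: "(2::'a) \<noteq> 0"
    and nz1: "\<And>k. 1 \<le> k \<Longrightarrow> k \<le> d \<Longrightarrow> rac_phi a b c d k \<noteq> 0"
    and nz2: "\<And>k. 1 \<le> k \<Longrightarrow> k \<le> d \<Longrightarrow> rac_phi a (-b-1) c d k \<noteq> 0"
  shows "\<exists>P. P \<in> carrier_mat (d+1) (d+1) \<and> det P \<noteq> 0 \<and> P * RA d a b c = RA d a (-b-1) c * P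
           \<and> P * RB d a b c = RB d a (-b-1) c * P"
proof -
  define b' where "b' = -b-1"
  have bb: "-b'-1 = b" unfolding b'_def by simp
  define Pa where "Pa = PaM d b'"
  define Dd where "Dd = DM d (dd (rac_phi a b c d))"
  define E where "E = DM d (\<lambda>s. inverse (dd (rac_phi a b' c d) s))"
  define M where "M = Dd * Pa * E"
  have cPa: "Pa \<in> carrier_mat (d+1) (d+1)" unfolding Pa_def by (rule PaM_carrier)
  have cDd: "Dd \<in> carrier_mat (d+1) (d+1)" "E \<in> carrier_mat (d+1) (d+1)" unfolding Dd_def E_def by (rule DM_carrier)+
  have hAa: "Pa * RA d b' a c = RA d b a c * Pa" unfolding Pa_def using acase_A[OF two, of d b' a c] bb by simp
  have hBa: "Pa * RB d b' a c = RB d b a c * Pa" unfolding Pa_def using acase_B[OF two, of d b' a c] bb by simp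
  have nz2': "\<And>k. 1 \<le> k \<Longrightarrow> k \<le> d \<Longrightarrow> rac_phi a b' c d k \<noteq> 0" using nz2 b'_def by simp
  have MA: "transpose_mat (RA d a b c) * M = M * transpose_mat (RA d a b' c)"
    unfolding M_def
    by (rule chain[OF _ _ RB_carrier' RB_carrier' cDd(1) cPa cDd(2)])
       (use T2[of d a b c] hBa T4[OF nz2'] in \<open>simp_all add: Dd_def E_def\<close>)
  have MB: "transpose_mat (RB d a b c) * M = M * transpose_mat (RB d a b' c)"
    unfolding M_def
    by (rule chain[OF _ _ RA_carrier' RA_carrier' cDd(1) cPa cDd(2)])
       (use T1[of d a b c] hAa T3[OF nz2'] in \<open>simp_all add: Dd_def E_def\<close>)
  have cM: "M \<in> carrier_mat (d+1) (d+1)" unfolding M_def using cPa cDd by simp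
  define P where "P = transpose_mat M"
  have cP: "P \<in> carrier_mat (d+1) (d+1)" unfolding P_def using cM by simp
  have "P * RA d a b c = transpose_mat (transpose_mat (RA d a b c) * M)"
    unfolding P_def by (subst transpose_mult[of _ "d+1" "d+1" _ "d+1"]) (use cM in simp_all)
  also have "\<dots> = transpose_mat (M * transpose_mat (RA d a b' c))" unfolding MA ..
  also have "\<dots> = RA d a b' c * P"
    unfolding P_def by (subst transpose_mult[of _ "d+1" "d+1" _ "d+1"]) (use cM in simp_all)
  finally have PA: "P * RA d a b c = RA d a (-b-1) c * P" unfolding b'_def .
  have "P * RB d a b c = transpose_mat (transpose_mat (RB d a b c) * M)"
    unfolding P_def by (subst transpose_mult[of _ "d+1" "d+1" _ "d+1"]) (use cM in simp_all)
  also have "\<dots> = transpose_mat (M * transpose_mat (RB d a b' c))" unfolding MB ..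
  also have "\<dots> = RB d a b' c * P"
    unfolding P_def by (subst transpose_mult[of _ "d+1" "d+1" _ "d+1"]) (use cM in simp_all)
  finally have PB: "P * RB d a b c = RB d a (-b-1) c * P" unfolding b'_def .
  have "det P = det M" unfolding P_def by (rule det_transpose[OF cM])
  also have "det M = det Dd * det Pa * det E"
    unfolding M_def using cPa cDd by (simp add: det_mult[of _ "d+1"])
  also have "\<dots> \<noteq> 0"
  proof -
    have "det Dd \<noteq> 0" unfolding Dd_def
      by (rule det_DM) (use nz1 in \<open>auto simp: dd_def prod_zero_iff\<close>)
    moreover have "det E \<noteq> 0" unfolding E_def
      by (rule det_DM) (use nz2' in \<open>auto simp: dd_def prod_zero_iff\<close>)
    moreover have "det Pa = 1" unfolding Pa_def by (rule PaM_det)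
    ultimately show ?thesis by simp
  qed
  finally show ?thesis using cP PA PB by blast
qed


lemma inv_ex:
  fixes P :: "'a::field mat"
  assumes P: "P \<in> carrier_mat n n" and dP: "det P \<noteq> 0"
  shows "\<exists>Q. Q \<in> carrier_mat n n \<and> P * Q = 1\<^sub>m n"
proof -
  have "P \<in> Units (ring_mat TYPE('a) n undefined)" by (rule det_non_zero_imp_unit[OF P dP])
  then show ?thesis unfolding Units_def ring_mat_def by auto
qed

lemma phi_sw:
  fixes a b c :: "'a::field"
  assumes two: "(2::'a) \<noteq> 0" and k: "k \<le> d"
  shows "rac_phi a (-b-1) c d k = rac_phi (-a-1) b c d (d+1-k)"
proof -
  define H where "H = (half_d d :: 'a)"
  have dH: "(of_nat d::'a) = 2*H" using two by (simp add: H_def half_d_def)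
  have ok: "(of_nat (d+1-k)::'a) = of_nat d + 1 - of_nat k" using k by (simp add: of_nat_diff)
  have core: "\<And>K::'a. K * (K - 2*H - 1) * (a + (-b-1) + c + H - K + 2) * (a + (-b-1) - c + H - K + 1)
     = (2*H + 1 - K) * ((2*H + 1 - K) - 2*H - 1) * ((-a-1) + b + c + H - (2*H + 1 - K) + 2) * ((-a-1) + b - c + H - (2*H + 1 - K) + 1)"
    by (simp add: algebra_simps)
  show ?thesis unfolding rac_phi_def ok dH H_def[symmetric] by (rule core)
qed

lemma delta_a: "rac_delta (-a-1) b c d = rac_delta (a::'a::field) b c d"
  unfolding rac_delta_def by (simp add: algebra_simps)
lemma delta_b: "rac_delta a (-b-1) c d = rac_delta (a::'a::field) b c d"
  unfolding rac_delta_def by (simp add: algebra_simps)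
lemma delta_c: "rac_delta a b (-c-1) d = rac_delta (a::'a::field) b c d"
  unfolding rac_delta_def by (simp add: algebra_simps)
lemma phi_c: "rac_phi a b (-c-1) d i = rac_phi (a::'a::field) b c d i"
  unfolding rac_phi_def by (simp add: algebra_simps)

theorem theorem5p3:
  fixes a b c :: "'a::alg_closed_field" and d :: nat
  assumes "(2::'a) \<noteq> 0"
    and "rac_irreducible d a b c"
  shows "rac_iso d a b c (-a-1) b c \<and> rac_iso d a b c a (-b-1) c \<and> rac_iso d a b c a b (-c-1)"
proof (intro conjI)
  note two = assms(1) and irr = assms(2)
  show isoA: "rac_iso d a b c (-a-1) b c"
    by (rule gen_iso[OF PaM_carrier _ acase_A[OF two] acase_B[OF two]]) (simp_all add: PaM_det delta_a)
  show "rac_iso d a b c a b (-c-1)"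
  proof (rule gen_iso[of "1\<^sub>m (d+1)"])
    show "1\<^sub>m (d + 1) * RA d a b c = RA d a b (- c - 1) * 1\<^sub>m (d + 1)"
      by (simp add: RA_def)
    show "1\<^sub>m (d + 1) * RB d a b c = RB d a b (- c - 1) * 1\<^sub>m (d + 1)"
    proof -
      have "RB d a b (-c-1) = RB d a b c" unfolding RB_def phi_c ..
      then show ?thesis by simp
    qed
  qed (simp_all add: delta_c)
  have nz1: "rac_phi a b c d k \<noteq> 0" if "1 \<le> k" "k \<le> d" for k
  proof
    assume "rac_phi a b c d k = 0"
    then have "\<not> rac_irreducible d a b c"
      by (intro red[of "1\<^sub>m (d+1)" d "1\<^sub>m (d+1)" a b c a b c k]) (use that in simp_all)
    then show False using irr by simp
  qed
  obtain Q where Q: "Q \<in> carrier_mat (d+1) (d+1)" "PaM d a * Q = 1\<^sub>m (d+1)"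
    using inv_ex[OF PaM_carrier, of d a] PaM_det[of d a] by auto
  have nz3: "rac_phi (-a-1) b c d k \<noteq> 0" if "1 \<le> k" "k \<le> d" for k
  proof
    assume "rac_phi (-a-1) b c d k = 0"
    then have "\<not> rac_irreducible d a b c"
      by (intro red[OF PaM_carrier Q acase_A[OF two] acase_B[OF two], of k]) (use that in simp_all)
    then show False using irr by simp
  qed
  have nz2: "rac_phi a (-b-1) c d k \<noteq> 0" if "1 \<le> k" "k \<le> d" for k
    unfolding phi_sw[OF two that(2)] by (rule nz3) (use that in auto)
  obtain P where P: "P \<in> carrier_mat (d+1) (d+1)" "det P \<noteq> 0" "P * RA d a b c = RA d a (-b-1) c * P"
    "P * RB d a b c = RB d a (-b-1) c * P"
    using bcase[OF two nz1 nz2] by blast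
  show "rac_iso d a b c a (-b-1) c"
    by (rule gen_iso[OF P]) (simp add: delta_b)
qed


end
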